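(* Let $T$ be a finite tree and let $P=p_0p_1\dots p_k$ ($k\ge1$) be a path in $T$ such that each of $p_1,\dots,p_{k-1}$ has degree $2$ in $T$. Let $B$ be the vertex set of the component containing $p_k$ of the graph obtained from $T$ by deleting the edges of $P$, and let $T[B\cup P]$ denote the subgraph of $T$ induced by $B\cup\{p_0,\dots,p_k\}$. If $k$ is even, then for every $\ell\ge1$, \[\omega_{\ell}(p_0,T[B\cup P])-\omega_{\ell}(p_0,P)\leq \omega_{\ell}(p_k,T[B\cup P])-\omega_{\ell}(p_k,P).\]
   Context: For a graph $G$, a vertex $x$ of $G$ and $\ell\ge1$, $\omega_\ell(x,G)$ denotes the number of walks of length $\ell$ in $G$ starting at $x$ (a walk of length $\ell$ being a sequence of vertices $x=v_0,v_1,\dots,v_\ell$ with $v_{i-1}v_i\in E(G)$). Here $P$ is regarded as a graph (the path). *)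

theory Defs
  imports Main
begin

definition simple_graph :: "'a set \<Rightarrow> ('a \<Rightarrow> 'a \<Rightarrow> bool) \<Rightarrow> bool" where
  "simple_graph V E \<longleftrightarrow> finite V \<and> (\<forall>x y. E x y \<longrightarrow> x \<in> V \<and> y \<in> V)
     \<and> (\<forall>x y. E x y \<longrightarrow> E y x) \<and> (\<forall>x. \<not> E x x)"

definition is_walk :: "('a \<Rightarrow> 'a \<Rightarrow> bool) \<Rightarrow> 'a list \<Rightarrow> bool" where
  "is_walk E ws \<longleftrightarrow> ws \<noteq> [] \<and> (\<forall>i. Suc i < length ws \<longrightarrow> E (ws ! i) (ws ! Suc i))"

definition connected_graph :: "'a set \<Rightarrow> ('a \<Rightarrow> 'a \<Rightarrow> bool) \<Rightarrow> bool" where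
  "connected_graph V E \<longleftrightarrow> V \<noteq> {} \<and>
     (\<forall>x\<in>V. \<forall>y\<in>V. \<exists>ws. is_walk E ws \<and> hd ws = x \<and> last ws = y)"

definition is_cycle :: "('a \<Rightarrow> 'a \<Rightarrow> bool) \<Rightarrow> 'a list \<Rightarrow> bool" where
  "is_cycle E cs \<longleftrightarrow> length cs \<ge> 3 \<and> distinct cs \<and> is_walk E cs \<and> E (last cs) (hd cs)"

definition is_tree :: "'a set \<Rightarrow> ('a \<Rightarrow> 'a \<Rightarrow> bool) \<Rightarrow> bool" where
  "is_tree V E \<longleftrightarrow> simple_graph V E \<and> connected_graph V E \<and> (\<nexists>cs. is_cycle E cs)"

definition is_path :: "('a \<Rightarrow> 'a \<Rightarrow> bool) \<Rightarrow> 'a list \<Rightarrow> bool" where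
  "is_path E ps \<longleftrightarrow> is_walk E ps \<and> distinct ps"

definition degree :: "('a \<Rightarrow> 'a \<Rightarrow> bool) \<Rightarrow> 'a \<Rightarrow> nat" where
  "degree E x = card {y. E x y}"

definition path_edges :: "'a list \<Rightarrow> 'a \<Rightarrow> 'a \<Rightarrow> bool" where
  "path_edges ps x y \<longleftrightarrow> (\<exists>i. Suc i < length ps \<and>
      ((x = ps ! i \<and> y = ps ! Suc i) \<or> (y = ps ! i \<and> x = ps ! Suc i)))"

definition delete_path_edges :: "('a \<Rightarrow> 'a \<Rightarrow> bool) \<Rightarrow> 'a list \<Rightarrow> 'a \<Rightarrow> 'a \<Rightarrow> bool" where
  "delete_path_edges E ps x y \<longleftrightarrow> E x y \<and> \<not> path_edges ps x y"

definition component :: "'a set \<Rightarrow> ('a \<Rightarrow> 'a \<Rightarrow> bool) \<Rightarrow> 'a \<Rightarrow> 'a set" where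
  "component V E v = {u \<in> V. \<exists>ws. is_walk E ws \<and> hd ws = v \<and> last ws = u}"

definition induced :: "('a \<Rightarrow> 'a \<Rightarrow> bool) \<Rightarrow> 'a set \<Rightarrow> 'a \<Rightarrow> 'a \<Rightarrow> bool" where
  "induced E S x y \<longleftrightarrow> E x y \<and> x \<in> S \<and> y \<in> S"

definition walks_count :: "('a \<Rightarrow> 'a \<Rightarrow> bool) \<Rightarrow> 'a \<Rightarrow> nat \<Rightarrow> nat" where
  "walks_count E x l = card {ws. length ws = Suc l \<and> hd ws = x \<and> is_walk E ws}"

end

theory Submission imports Defs begin

lemma is_walk_mono: assumes "is_walk R ws" "\<And>a b. R a b \<Longrightarrow> R' a b" shows "is_walk R' ws"
  using assms unfolding is_walk_def by blast

lemma walk_set: assumes "is_walk R ws" "\<And>a b. R a b \<Longrightarrow> a \<in> V \<and> b \<in> V"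
  shows "set ws \<subseteq> insert (hd ws) V"
proof
  fix x assume "x \<in> set ws"
  then obtain i where i: "i < length ws" "ws!i = x" by (auto simp: in_set_conv_nth)
  show "x \<in> insert (hd ws) V"
  proof (cases i)
    case 0 then show ?thesis using i assms(1) by (simp add: hd_conv_nth is_walk_def)
  next
    case (Suc j) then have "R (ws!j) (ws!i)" using assms(1) i unfolding is_walk_def by auto
    then show ?thesis using assms(2) i by auto
  qed
qed

lemma ivt_nat: fixes a :: "nat \<Rightarrow> nat"
  assumes "a 0 \<le> m" "m \<le> a t" "\<forall>n<t. a (Suc n) \<le> Suc (a n)" shows "\<exists>j\<le>t. a j = m"
using assms proof (induction t)
  case 0 then show ?case by auto
next
  case (Suc t)
  show ?case proof (cases "m \<le> a t")
    case True
    then obtain j where "j \<le> t" "a j = m" using Suc by auto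
    then show ?thesis by (intro exI[of _ j]) auto
  next
    case False
    have "a (Suc t) \<le> Suc (a t)" using Suc.prems(3) by auto
    then have "a (Suc t) = m" using False Suc.prems(2) by linarith
    then show ?thesis by blast
  qed
qed

lemma acyclic_no_walk:
  assumes sym: "\<forall>x y. E x y \<longrightarrow> E y x" and irr: "\<forall>x. \<not> E x x"
    and nocyc: "\<nexists>cs. is_cycle E cs"
    and ab: "E a b" and f0: "f 0 = a" and fn: "f n = b"
    and steps: "\<forall>i<n. E (f i) (f (Suc i)) \<and> \<not>(f i = a \<and> f (Suc i) = b) \<and> \<not>(f i = b \<and> f (Suc i) = a)"
  shows False
proof -
  define F where "F x y \<longleftrightarrow> E x y \<and> \<not>(x = a \<and> y = b) \<and> \<not>(x = b \<and> y = a)" for x y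
  define Q where "Q n \<longleftrightarrow> (\<exists>f. f 0 = a \<and> f n = b \<and> (\<forall>i<n. F (f i) (f (Suc i))))" for n
  have "Q n" unfolding Q_def F_def using f0 fn steps by blast
  define n0 where "n0 = (LEAST n. Q n)"
  have Qn0: "Q n0" unfolding n0_def using \<open>Q n\<close> by (rule LeastI)
  have min: "\<And>n'. Q n' \<Longrightarrow> n0 \<le> n'" unfolding n0_def by (rule Least_le)
  obtain g where g0: "g 0 = a" and gn: "g n0 = b" and gs: "\<forall>i<n0. F (g i) (g (Suc i))"
    using Qn0 unfolding Q_def by blast
  have key: False if ij: "i < j" "j \<le> n0" "g i = g j" for i j
  proof -
    define h where "h x = (if x \<le> i then g x else g (x + (j - i)))" for x
    have hx: "h x = g (x + (j - i))" if "x \<ge> i" for x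
      using that ij unfolding h_def by (cases "x = i") auto
    have "Q (n0 - (j - i))" unfolding Q_def
    proof (intro exI[of _ h] conjI allI impI)
      show "h 0 = a" using g0 unfolding h_def by simp
      show "h (n0 - (j - i)) = b" using hx[of "n0 - (j - i)"] ij gn by simp
      fix x assume x: "x < n0 - (j - i)"
      show "F (h x) (h (Suc x))"
      proof (cases "Suc x \<le> i")
        case True then show ?thesis using gs x unfolding h_def by auto
      next
        case False
        then have "h x = g (x + (j - i))" "h (Suc x) = g (Suc (x + (j - i)))" using hx by auto
        moreover have "x + (j - i) < n0" using x ij by linarith
        ultimately show ?thesis using gs by auto
      qed
    qed
    then have "n0 \<le> n0 - (j - i)" by (rule min)
    then show False using ij by linarith
  qed
  have inj: "inj_on g {0..<Suc n0}"
  proof (rule inj_onI)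
    fix i j assume "i \<in> {0..<Suc n0}" "j \<in> {0..<Suc n0}" "g i = g j"
    then show "i = j" using key[of i j] key[of j i] by (cases i j rule: linorder_cases) auto
  qed
  have ab_ne: "a \<noteq> b" using ab irr by auto
  have "n0 \<noteq> 0" proof assume "n0 = 0" then show False using g0 gn ab_ne by simp qed
  moreover have "n0 \<noteq> 1" using gs g0 gn unfolding F_def by auto
  ultimately have n2: "n0 \<ge> 2" by linarith
  define cs where "cs = map g [0..<Suc n0]"
  have "is_cycle E cs" unfolding is_cycle_def is_walk_def cs_def
  proof (intro conjI allI impI)
    show "3 \<le> length (map g [0..<Suc n0])" using n2 by simp
    show "distinct (map g [0..<Suc n0])" using inj by (simp add: distinct_map del: upt_Suc)
    show "map g [0..<Suc n0] \<noteq> []" by simp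
    fix i assume "Suc i < length (map g [0..<Suc n0])"
    then show "E (map g [0..<Suc n0] ! i) (map g [0..<Suc n0] ! Suc i)"
      using gs unfolding F_def by (simp add: nth_map del: upt_Suc)
  next
    have "last (map g [0..<Suc n0]) = b" using gn by (simp del: upt_Suc add: last_map)
    moreover have "hd (map g [0..<Suc n0]) = a" using g0 by (simp del: upt_Suc add: hd_map)
    ultimately show "E (last (map g [0..<Suc n0])) (hd (map g [0..<Suc n0]))" using ab sym by simp
  qed
  then show False using nocyc by blast
qed

theorem lemma1:
  fixes V :: "'a set" and E :: "'a \<Rightarrow> 'a \<Rightarrow> bool" and ps :: "'a list" and k :: nat
  assumes tree: "is_tree V E"
    and len: "length ps = Suc k" and k1: "k \<ge> 1"
    and path: "is_path E ps"
    and deg: "\<And>i. 1 \<le> i \<Longrightarrow> i \<le> k - 1 \<Longrightarrow> degree E (ps ! i) = 2"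
    and B: "B = component V (delete_path_edges E ps) (ps ! k)"
    and keven: "even k"
    and l1: "l \<ge> 1"
  shows "int (walks_count (induced E (B \<union> set ps)) (ps ! 0) l) - int (walks_count (path_edges ps) (ps ! 0) l)
      \<le> int (walks_count (induced E (B \<union> set ps)) (ps ! k) l) - int (walks_count (path_edges ps) (ps ! k) l)"
proof -
  define H where "H = induced E (B \<union> set ps)"
  define Pe where "Pe = path_edges ps"
  define p where "p i = ps ! i" for i
  define m where "m = k div 2"
  have k2: "k \<ge> 2" and km: "k = 2 * m" and m1: "m \<ge> 1" and mk: "m < k"
    using k1 keven unfolding m_def by (auto elim!: evenE)
  have finV: "finite V" and inV: "\<And>x y. E x y \<Longrightarrow> x \<in> V \<and> y \<in> V"
    and sym: "\<forall>x y. E x y \<longrightarrow> E y x" and irr: "\<forall>x. \<not> E x x"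
    using tree unfolding is_tree_def simple_graph_def by auto
  have nocyc: "\<nexists>cs. is_cycle E cs" using tree unfolding is_tree_def by auto
  have dist: "distinct ps" using path unfolding is_path_def by auto
  have walkP: "\<And>i. i < k \<Longrightarrow> E (p i) (p (Suc i))"
    using path len unfolding is_path_def is_walk_def p_def by auto
  have peq: "\<And>i j. i \<le> k \<Longrightarrow> j \<le> k \<Longrightarrow> p i = p j \<longleftrightarrow> i = j"
    unfolding p_def using dist len by (simp add: nth_eq_iff_index_eq)
  have Pe_iff: "\<And>i j. i \<le> k \<Longrightarrow> j \<le> k \<Longrightarrow> Pe (p i) (p j) \<longleftrightarrow> (Suc i = j \<or> Suc j = i)"
  proof -
    fix i j assume ij: "i \<le> k" "j \<le> k"
    show "Pe (p i) (p j) \<longleftrightarrow> (Suc i = j \<or> Suc j = i)"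
    proof
      assume "Pe (p i) (p j)"
      then obtain n where n: "n < k" "(p i = p n \<and> p j = p (Suc n)) \<or> (p j = p n \<and> p i = p (Suc n))"
        unfolding Pe_def path_edges_def p_def using len by auto
      then show "Suc i = j \<or> Suc j = i" using peq ij by auto
    next
      assume "Suc i = j \<or> Suc j = i"
      then show "Pe (p i) (p j)"
      proof
        assume "Suc i = j" then show ?thesis unfolding Pe_def path_edges_def p_def using len ij
          by (intro exI[of _ i]) auto
      next
        assume "Suc j = i" then show ?thesis unfolding Pe_def path_edges_def p_def using len ij
          by (intro exI[of _ j]) auto
      qed
    qed
  qed
  have inset: "\<And>x. x \<in> set ps \<longleftrightarrow> (\<exists>i\<le>k. x = p i)"
    unfolding p_def using len by (auto simp: in_set_conv_nth less_Suc_eq_le)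
  have Pe_set: "\<And>x y. Pe x y \<Longrightarrow> (\<exists>i\<le>k. x = p i) \<and> (\<exists>j\<le>k. y = p j)"
    unfolding Pe_def path_edges_def p_def using len by (auto intro: Suc_leI less_imp_le)
  have Pe_H: "\<And>x y. Pe x y \<Longrightarrow> H x y"
  proof -
    fix x y assume "Pe x y"
    then obtain n where n: "n < k" "(x = p n \<and> y = p (Suc n)) \<or> (y = p n \<and> x = p (Suc n))"
      unfolding Pe_def path_edges_def p_def using len by auto
    then have "E x y" using walkP sym by blast
    moreover have "x \<in> set ps" "y \<in> set ps" using n inset by (auto intro: Suc_leI less_imp_le)
    ultimately show "H x y" unfolding H_def induced_def by auto
  qed
  have Pe_sym: "\<And>x y. Pe x y \<Longrightarrow> Pe y x" unfolding Pe_def path_edges_def by blast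
  define idx where "idx x = (THE i. i \<le> k \<and> p i = x)" for x
  have idx_p: "\<And>i. i \<le> k \<Longrightarrow> idx (p i) = i"
    unfolding idx_def using peq by (intro the_equality) auto
  define \<sigma> where "\<sigma> x = p (k - idx x)" for x
  have \<sigma>_p: "\<And>i. i \<le> k \<Longrightarrow> \<sigma> (p i) = p (k - i)" unfolding \<sigma>_def using idx_p by simp
  have \<sigma>_Pe: "\<And>x y. Pe x y \<Longrightarrow> Pe (\<sigma> x) (\<sigma> y)"
  proof -
    fix x y assume xy: "Pe x y"
    then obtain i j where ij: "i \<le> k" "j \<le> k" "x = p i" "y = p j" using Pe_set by blast
    then have "Suc i = j \<or> Suc j = i" using Pe_iff xy by auto
    then have "Pe (p (k - i)) (p (k - j))" using Pe_iff ij by auto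
    then show "Pe (\<sigma> x) (\<sigma> y)" using ij \<sigma>_p by simp
  qed
  have treelem: "\<And>i y. i \<le> k \<Longrightarrow> H (p i) y \<Longrightarrow> \<not> Pe (p i) y \<Longrightarrow> i = k"
  proof (rule ccontr)
    fix i y assume i: "i \<le> k" and Hy: "H (p i) y" and nPe: "\<not> Pe (p i) y" and ik: "i \<noteq> k"
    have Ey: "E (p i) y" and yB: "y \<in> B \<union> set ps" using Hy unfolding H_def induced_def by auto
    show False
    proof (cases "i = 0")
      case False
      then have i1: "1 \<le> i" "i \<le> k - 1" using i ik by auto
      have "card {y. E (p i) y} = 2" using deg[OF i1] unfolding degree_def p_def by simp
      then obtain u v where uv: "{y. E (p i) y} = {u, v}" "u \<noteq> v" by (auto simp: card_2_iff)
      have "E (p i) (p (i - 1))" using walkP[of "i - 1"] sym i1 by auto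
      moreover have "E (p i) (p (Suc i))" using walkP[of i] i1 by auto
      moreover have "p (i - 1) \<noteq> p (Suc i)" using peq i1 by auto
      ultimately have a1: "p (i - 1) \<in> {u, v}" "p (Suc i) \<in> {u, v}" "p (i - 1) \<noteq> p (Suc i)"
        using uv(1) by (metis mem_Collect_eq)+
      have "y \<in> {u, v}" using uv(1) Ey by (metis mem_Collect_eq)
      then have "y = p (i - 1) \<or> y = p (Suc i)" using a1 uv(2) by auto
      then have "Pe (p i) y" using Pe_iff i1 by auto
      then show False using nPe by simp
    next
      case True
      show False
      proof (cases "y \<in> set ps")
        case True
        then obtain j where j: "j \<le> k" "y = p j" using inset by auto
        have "j \<noteq> 0" proof assume "j = 0" then show False using Ey irr j \<open>i = 0\<close> by simp qed
        moreover have "j \<noteq> 1" using nPe Pe_iff j \<open>i = 0\<close> k1 by auto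
        ultimately have j2: "j \<ge> 2" by linarith
        define f where "f n = (if n < j then p (Suc n) else p 0)" for n
        show False
        proof (rule acyclic_no_walk[OF sym irr nocyc, of "p 1" "p 0" f j])
          show "E (p 1) (p 0)" using walkP[of 0] sym k1 by auto
          show "f 0 = p 1" unfolding f_def using j2 by simp
          show "f j = p 0" unfolding f_def by simp
          show "\<forall>n<j. E (f n) (f (Suc n)) \<and> \<not> (f n = p 1 \<and> f (Suc n) = p 0) \<and> \<not> (f n = p 0 \<and> f (Suc n) = p 1)"
          proof (intro allI impI)
            fix n assume n: "n < j"
            show "E (f n) (f (Suc n)) \<and> \<not> (f n = p 1 \<and> f (Suc n) = p 0) \<and> \<not> (f n = p 0 \<and> f (Suc n) = p 1)"
            proof (cases "Suc n < j")
              case True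
              then show ?thesis unfolding f_def using walkP[of "Suc n"] j peq[of "Suc n" 1] peq[of "Suc n" 0] peq[of "Suc (Suc n)" 0] peq[of "Suc (Suc n)" 1] by auto
            next
              case False
              then have "n = j - 1" using n by auto
              then show ?thesis unfolding f_def using Ey \<open>i = 0\<close> j sym peq[of j 1] peq[of j 0] j2 n by auto
            qed
          qed
        qed
      next
        case False
        then have "y \<in> B" using yB by auto
        then obtain ws where ws: "is_walk (delete_path_edges E ps) ws" "hd ws = p k" "last ws = y"
          unfolding B component_def p_def by auto
        define L where "L = length ws - 1"
        have wsne: "ws \<noteq> []" using ws unfolding is_walk_def by auto
        have ws0: "ws ! 0 = p k" using ws wsne by (simp add: hd_conv_nth)
        have wsL: "ws ! L = y" using ws wsne unfolding L_def by (simp add: last_conv_nth)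
        have wsstep: "\<And>n. n < L \<Longrightarrow> E (ws ! n) (ws ! Suc n) \<and> \<not> Pe (ws ! n) (ws ! Suc n)"
          using ws(1) unfolding L_def is_walk_def delete_path_edges_def Pe_def by auto
        define f where "f n = (if n \<le> L then ws ! n else p (n - Suc L))" for n
        have PePair: "Pe (p (k - 1)) (p k)" using Pe_iff k1 by auto
        show False
        proof (rule acyclic_no_walk[OF sym irr nocyc, of "p k" "p (k - 1)" f "L + k"])
          show "E (p k) (p (k - 1))" using walkP[of "k - 1"] sym k1 by auto
          show "f 0 = p k" unfolding f_def using ws0 by simp
          show "f (L + k) = p (k - 1)" unfolding f_def using k1 by (simp add: Suc_diff_Suc)
          show "\<forall>n<L + k. E (f n) (f (Suc n)) \<and> \<not> (f n = p k \<and> f (Suc n) = p (k - 1)) \<and> \<not> (f n = p (k - 1) \<and> f (Suc n) = p k)"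
          proof (intro allI impI)
            fix n assume n: "n < L + k"
            show "E (f n) (f (Suc n)) \<and> \<not> (f n = p k \<and> f (Suc n) = p (k - 1)) \<and> \<not> (f n = p (k - 1) \<and> f (Suc n) = p k)"
            proof (cases "n < L")
              case True
              then show ?thesis unfolding f_def using wsstep[OF True] PePair Pe_sym by auto
            next
              case False
              show ?thesis
              proof (cases "n = L")
                case True
                have "\<not> Pe y (p 0)" using nPe Pe_sym \<open>i = 0\<close> by blast
                then show ?thesis unfolding f_def using True wsL Ey \<open>i = 0\<close> sym PePair Pe_sym by auto
              next
                case False
                define q where "q = n - Suc L"
                have q: "q < k - 1" "n = q + Suc L" using n False \<open>\<not> n < L\<close> unfolding q_def by auto
                have fq: "f n = p q" "f (Suc n) = p (Suc q)" unfolding f_def using q by auto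
                show ?thesis unfolding fq using walkP[of q] q peq[of q k] peq[of q "k - 1"] peq[of "Suc q" k] peq[of "Suc q" "k - 1"] by auto
              qed
            qed
          qed
        qed
      qed
    qed
  qed

  have \<sigma>_m: "\<sigma> (p m) = p m" using \<sigma>_p[of m] mk km by simp
  have \<sigma>_in: "\<And>i. i \<le> k \<Longrightarrow> \<sigma> (p i) = p m \<Longrightarrow> i = m"
  proof -
    fix i assume i: "i \<le> k" "\<sigma> (p i) = p m"
    then have "p (k - i) = p m" using \<sigma>_p by simp
    then have "k - i = m" using peq mk by simp
    then show "i = m" using km i by linarith
  qed
  define S where "S x = {ws. length ws = Suc l \<and> hd ws = x \<and> is_walk H ws}" for x
  define Q where "Q x = {ws. length ws = Suc l \<and> hd ws = x \<and> is_walk Pe ws}" for x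
  have QS: "\<And>x. Q x \<subseteq> S x" unfolding Q_def S_def using is_walk_mono Pe_H by blast
  have finS: "\<And>x. finite (S x)"
  proof -
    fix x
    have "S x \<subseteq> {xs. set xs \<subseteq> insert x V \<and> length xs = Suc l}"
    proof
      fix ws assume "ws \<in> S x"
      then have "length ws = Suc l" "hd ws = x" "is_walk H ws" unfolding S_def by auto
      moreover have "set ws \<subseteq> insert (hd ws) V"
        using walk_set[OF \<open>is_walk H ws\<close>, of V] inV unfolding H_def induced_def by blast
      ultimately show "ws \<in> {xs. set xs \<subseteq> insert x V \<and> length xs = Suc l}" by auto
    qed
    moreover have "finite {xs. set xs \<subseteq> insert x V \<and> length xs = Suc l}"
      using finV by (intro finite_lists_length_eq) auto
    ultimately show "finite (S x)" by (rule finite_subset)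
  qed
  have diff: "int (card (S x)) - int (card (Q x)) = int (card (S x - Q x))" for x
  proof -
    have f: "finite (Q x)" using QS finS by (rule finite_subset)
    have "card (Q x) \<le> card (S x)" using QS finS by (rule card_mono[rotated])
    then show ?thesis using card_Diff_subset[OF f QS] by simp
  qed
  define sf where "sf ws = (LEAST j. ws ! j = p m)" for ws :: "'a list"
  have props: "\<And>ws. ws \<in> S (p 0) - Q (p 0) \<Longrightarrow> sf ws < length ws \<and> ws ! sf ws = p m \<and> 0 < sf ws
      \<and> (\<forall>n < sf ws. ws ! n \<noteq> p m \<and> (\<exists>i\<le>k. ws ! n = p i) \<and> Pe (ws ! n) (ws ! Suc n))
      \<and> (\<exists>t \<ge> sf ws. Suc t < length ws \<and> \<not> Pe (ws ! t) (ws ! Suc t))"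
  proof -
    fix ws assume wsin: "ws \<in> S (p 0) - Q (p 0)"
    then have lw: "length ws = Suc l" and hw: "hd ws = p 0" and wH: "is_walk H ws" and nw: "\<not> is_walk Pe ws"
      unfolding S_def Q_def by auto
    have wne: "ws \<noteq> []" using lw by auto
    have ws0: "ws ! 0 = p 0" using hw wne by (simp add: hd_conv_nth)
    have ex: "\<exists>n. Suc n < length ws \<and> \<not> Pe (ws ! n) (ws ! Suc n)" using nw wne unfolding is_walk_def by auto
    define t where "t = (LEAST n. Suc n < length ws \<and> \<not> Pe (ws ! n) (ws ! Suc n))"
    have t: "Suc t < length ws" "\<not> Pe (ws ! t) (ws ! Suc t)"
      using LeastI_ex[OF ex] unfolding t_def by auto
    have before: "\<And>n. n < t \<Longrightarrow> Pe (ws ! n) (ws ! Suc n)"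
    proof (rule ccontr)
      fix n assume n: "n < t" "\<not> Pe (ws ! n) (ws ! Suc n)"
      then have "Suc n < length ws" using t by linarith
      then have "t \<le> n" unfolding t_def using n by (intro Least_le) auto
      then show False using n by simp
    qed
    have inps: "\<And>n. n \<le> t \<Longrightarrow> \<exists>i\<le>k. ws ! n = p i"
    proof -
      fix n show "n \<le> t \<Longrightarrow> \<exists>i\<le>k. ws ! n = p i"
      proof (induction n)
        case 0 then show ?case using ws0 by auto
      next
        case (Suc n) then show ?case using before[of n] Pe_set by auto
      qed
    qed
    obtain i where i: "i \<le> k" "ws ! t = p i" using inps by auto
    have "H (ws ! t) (ws ! Suc t)" using wH t unfolding is_walk_def by auto
    then have "i = k" using treelem[of i "ws ! Suc t"] i t by auto
    define a where "a n = idx (ws ! n)" for n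
    have aP: "\<And>n. n \<le> t \<Longrightarrow> ws ! n = p (a n) \<and> a n \<le> k"
      unfolding a_def using inps idx_p by force
    have a0: "a 0 = 0" unfolding a_def using ws0 idx_p by simp
    have at: "a t = k" unfolding a_def using i \<open>i = k\<close> idx_p by simp
    have astep: "\<forall>n<t. a (Suc n) \<le> Suc (a n)"
    proof (intro allI impI)
      fix n assume n: "n < t"
      have "Pe (p (a n)) (p (a (Suc n)))" using before[OF n] aP[of n] aP[of "Suc n"] n by simp
      then show "a (Suc n) \<le> Suc (a n)" using Pe_iff aP[of n] aP[of "Suc n"] n by auto
    qed
    obtain j where j: "j \<le> t" "a j = m" using ivt_nat[of a m t] a0 at astep mk by auto
    have wj: "ws ! j = p m" using aP[of j] j by simp
    have sj: "sf ws \<le> j" unfolding sf_def using wj by (rule Least_le)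
    have ws_s: "ws ! sf ws = p m" unfolding sf_def using wj by (rule LeastI)
    have nots: "\<And>n. n < sf ws \<Longrightarrow> ws ! n \<noteq> p m" unfolding sf_def by (rule not_less_Least)
    have "sf ws \<noteq> 0" proof assume "sf ws = 0" then show False using ws_s ws0 peq[of 0 m] mk m1 by simp qed
    then show "sf ws < length ws \<and> ws ! sf ws = p m \<and> 0 < sf ws
      \<and> (\<forall>n < sf ws. ws ! n \<noteq> p m \<and> (\<exists>i\<le>k. ws ! n = p i) \<and> Pe (ws ! n) (ws ! Suc n))
      \<and> (\<exists>t \<ge> sf ws. Suc t < length ws \<and> \<not> Pe (ws ! t) (ws ! Suc t))"
      using sj j t ws_s nots inps before by (auto intro!: exI[of _ t])
  qed
  define g where "g ws = map (\<lambda>j. if j < sf ws then \<sigma> (ws ! j) else ws ! j) [0..<length ws]" for ws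
  have g_len: "\<And>ws. length (g ws) = length ws" unfolding g_def by simp
  have g_nth: "\<And>ws j. j < length ws \<Longrightarrow> g ws ! j = (if j < sf ws then \<sigma> (ws ! j) else ws ! j)"
    unfolding g_def by simp
  have g_sf: "\<And>ws. ws \<in> S (p 0) - Q (p 0) \<Longrightarrow> sf (g ws) = sf ws"
  proof -
    fix ws assume ws: "ws \<in> S (p 0) - Q (p 0)"
    note pr = props[OF ws]
    show "sf (g ws) = sf ws" unfolding sf_def[of "g ws"]
    proof (rule Least_equality)
      show "g ws ! sf ws = p m" using g_nth pr by simp
      fix y assume y: "g ws ! y = p m"
      show "sf ws \<le> y"
      proof (rule ccontr)
        assume "\<not> sf ws \<le> y"
        then have ys: "y < sf ws" by simp
        then have "\<sigma> (ws ! y) = p m" using y g_nth pr by auto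
        moreover obtain i where "i \<le> k" "ws ! y = p i" using pr ys by blast
        ultimately have "ws ! y = p m" using \<sigma>_in by auto
        then show False using pr ys by blast
      qed
    qed
  qed
  have g_in: "\<And>ws. ws \<in> S (p 0) - Q (p 0) \<Longrightarrow> g ws \<in> S (p k) - Q (p k)"
  proof -
    fix ws assume ws: "ws \<in> S (p 0) - Q (p 0)"
    note pr = props[OF ws]
    have lw: "length ws = Suc l" and hw: "hd ws = p 0" and wH: "is_walk H ws"
      using ws unfolding S_def by auto
    have wne: "ws \<noteq> []" using lw by auto
    have "g ws \<noteq> []" using wne g_len[of ws] by (metis length_0_conv)
    then have "hd (g ws) = g ws ! 0" by (simp add: hd_conv_nth)
    also have "\<dots> = \<sigma> (ws ! 0)" using g_nth wne pr by simp
    also have "\<dots> = p k" using hw wne \<sigma>_p[of 0] by (simp add: hd_conv_nth)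
    finally have hg: "hd (g ws) = p k" .
    have wg: "is_walk H (g ws)" unfolding is_walk_def
    proof (intro conjI allI impI)
      show "g ws \<noteq> []" using wne g_len[of ws] by (metis length_0_conv)
      fix n assume n: "Suc n < length (g ws)"
      then have n': "Suc n < length ws" using g_len by simp
      show "H (g ws ! n) (g ws ! Suc n)"
      proof (cases "Suc n < sf ws")
        case True
        then have "Pe (ws ! n) (ws ! Suc n)" using pr by auto
        then have "Pe (\<sigma> (ws ! n)) (\<sigma> (ws ! Suc n))" by (rule \<sigma>_Pe)
        then show ?thesis using g_nth n' True Pe_H by simp
      next
        case False
        show ?thesis
        proof (cases "Suc n = sf ws")
          case True
          then have "n < sf ws" by simp
          then have "Pe (ws ! n) (ws ! Suc n)" using pr by blast
          then have "Pe (\<sigma> (ws ! n)) (\<sigma> (ws ! Suc n))" by (rule \<sigma>_Pe)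
          moreover have "\<sigma> (ws ! Suc n) = ws ! Suc n" using True pr \<sigma>_m by simp
          ultimately show ?thesis using g_nth n' True Pe_H by simp
        next
          case False
          then show ?thesis using g_nth n' \<open>\<not> Suc n < sf ws\<close> wH unfolding is_walk_def by auto
        qed
      qed
    qed
    have ng: "\<not> is_walk Pe (g ws)"
    proof
      assume "is_walk Pe (g ws)"
      obtain t where t: "t \<ge> sf ws" "Suc t < length ws" "\<not> Pe (ws ! t) (ws ! Suc t)" using pr by blast
      then have "Pe (g ws ! t) (g ws ! Suc t)" using \<open>is_walk Pe (g ws)\<close> g_len unfolding is_walk_def by auto
      then show False using t g_nth by simp
    qed
    show "g ws \<in> S (p k) - Q (p k)" unfolding S_def Q_def using hg wg ng g_len lw by auto
  qed
  have g_inj: "inj_on g (S (p 0) - Q (p 0))"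
  proof (rule inj_onI)
    fix w1 w2 assume w1: "w1 \<in> S (p 0) - Q (p 0)" and w2: "w2 \<in> S (p 0) - Q (p 0)" and eq: "g w1 = g w2"
    have sfe: "sf w1 = sf w2" using g_sf[OF w1] g_sf[OF w2] eq by simp
    have le: "length w1 = length w2" using g_len eq by metis
    note p1 = props[OF w1] and p2 = props[OF w2]
    show "w1 = w2"
    proof (rule nth_equalityI[OF le])
      fix j assume j: "j < length w1"
      have ge: "g w1 ! j = g w2 ! j" using eq by simp
      show "w1 ! j = w2 ! j"
      proof (cases "j < sf w1")
        case True
        obtain i1 where i1: "i1 \<le> k" "w1 ! j = p i1" using p1 True by blast
        obtain i2 where i2: "i2 \<le> k" "w2 ! j = p i2" using p2 True sfe by auto
        have "\<sigma> (w1 ! j) = \<sigma> (w2 ! j)" using ge g_nth j le True sfe by simp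
        then have "p (k - i1) = p (k - i2)" using i1 i2 \<sigma>_p by simp
        then have "k - i1 = k - i2" using peq by simp
        then have "i1 = i2" using i1 i2 by linarith
        then show ?thesis using i1 i2 by simp
      next
        case False
        then show ?thesis using ge g_nth j le sfe by simp
      qed
    qed
  qed
  have cardle: "card (S (p 0) - Q (p 0)) \<le> card (S (p k) - Q (p k))"
    using g_inj g_in finS by (intro card_inj_on_le) auto
  have wcH: "\<And>x. walks_count (induced E (B \<union> set ps)) x l = card (S x)"
    unfolding walks_count_def S_def H_def by simp
  have wcP: "\<And>x. walks_count (path_edges ps) x l = card (Q x)"
    unfolding walks_count_def Q_def Pe_def by simp
  show ?thesis unfolding wcH wcP using diff[of "p 0"] diff[of "p k"] cardle unfolding p_def by simp
qed

end
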